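(* Let $L:\mathbb{R}^n\to\mathbb{R}$ be $\mathcal{C}^1$, convex, with a unique minimizer $z_1^*$ ($L^*=L(z_1^* )$), and with $\nabla L$ Lipschitz with constant $M>0$. Let $\zeta>0$, $\bar d(t)=\frac{3}{2(t+2)}$, $\bar\beta(t)=\frac{t-1}{t+2}$. Then for every $\varepsilon>0$ and every compact set $K\subset\mathbb{R}^{2n}$ there exists $t^*>0$ such that every maximal solution $t\mapsto(z(t),\tau(t))$ of $\dot z_1=z_2$, $\dot z_2=-2\bar d(\tau)z_2-\frac{\zeta^2}{M}\nabla L(z_1+\bar\beta(\tau)z_2)$, $\dot\tau=1$ on $\mathbb{R}^{2n}\times\mathbb{R}_{\ge0}$ with $(z(0),\tau(0))\in K\times\{0\}$ satisfies $$\frac{\zeta^2}{M}(L(z_1(t))-L^* )\le\varepsilon\quad\text{for all }t\ge t^*.$$ *)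

theory Defs
  imports "HOL-Analysis.Analysis"
begin

definition dbar :: "real \<Rightarrow> real" where
  "dbar t = 3 / (2 * (t + 2))"

definition betabar :: "real \<Rightarrow> real" where
  "betabar t = (t - 1) / (t + 2)"

definition is_solution ::
  "real \<Rightarrow> real \<Rightarrow> (real^'n \<Rightarrow> real^'n) \<Rightarrow> real set
   \<Rightarrow> (real \<Rightarrow> real^'n) \<Rightarrow> (real \<Rightarrow> real^'n) \<Rightarrow> (real \<Rightarrow> real) \<Rightarrow> bool" where
  "is_solution zeta M gradL J z1 z2 tau \<longleftrightarrow>
     is_interval J \<and> 0 \<in> J \<and>
     (\<forall>t\<in>J. tau t \<ge> 0 \<and>
        (z1 has_vector_derivative z2 t) (at t within J) \<and>
        (z2 has_vector_derivative
           (- (2 * dbar (tau t)) *\<^sub>R z2 t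
            - (zeta\<^sup>2 / M) *\<^sub>R gradL (z1 t + betabar (tau t) *\<^sub>R z2 t))) (at t within J) \<and>
        (tau has_vector_derivative 1) (at t within J))"

definition is_maximal_solution ::
  "real \<Rightarrow> real \<Rightarrow> (real^'n \<Rightarrow> real^'n) \<Rightarrow> real set
   \<Rightarrow> (real \<Rightarrow> real^'n) \<Rightarrow> (real \<Rightarrow> real^'n) \<Rightarrow> (real \<Rightarrow> real) \<Rightarrow> bool" where
  "is_maximal_solution zeta M gradL J z1 z2 tau \<longleftrightarrow>
     is_solution zeta M gradL J z1 z2 tau \<and>
     (\<forall>J' w1 w2 s. is_solution zeta M gradL J' w1 w2 s \<and> J \<subseteq> J' \<and>
        (\<forall>t\<in>J. w1 t = z1 t \<and> w2 t = z2 t \<and> s t = tau t) \<longrightarrow> J' = J)"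

end

theory Submission
  imports Defs
begin

lemma descent:
  fixes L :: "'a::real_inner \<Rightarrow> real" and gradL :: "'a \<Rightarrow> 'a"
  assumes grad: "\<And>x. (L has_derivative (\<lambda>h. gradL x \<bullet> h)) (at x)"
    and lip: "\<And>x y. norm (gradL x - gradL y) \<le> M * norm (x - y)"
  shows "L (x + h) \<le> L x + gradL x \<bullet> h + M/2 * (h \<bullet> h)"
proof -
  define \<phi> where "\<phi> \<theta> = L (x + \<theta> *\<^sub>R h) - \<theta> * (gradL x \<bullet> h) - M/2 * \<theta>\<^sup>2 * (h \<bullet> h)" for \<theta>
  have d: "(\<phi> has_real_derivative (gradL (x + \<theta> *\<^sub>R h) \<bullet> h - gradL x \<bullet> h - M*\<theta>*(h\<bullet>h))) (at \<theta>)" for \<theta>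
  proof -
    have "((\<lambda>\<theta>. L (x + \<theta> *\<^sub>R h)) has_derivative (\<lambda>k. gradL (x + \<theta> *\<^sub>R h) \<bullet> (k *\<^sub>R h))) (at \<theta>)"
      by (rule has_derivative_compose[OF _ grad]) (auto intro!: derivative_eq_intros)
    then show ?thesis unfolding \<phi>_def has_field_derivative_def
      by (auto intro!: derivative_eq_intros simp: algebra_simps power2_eq_square)
  qed
  have nonpos: "gradL (x + \<theta> *\<^sub>R h) \<bullet> h - gradL x \<bullet> h - M*\<theta>*(h\<bullet>h) \<le> 0" if "\<theta> \<ge> 0" for \<theta>
  proof -
    have "gradL (x + \<theta> *\<^sub>R h) \<bullet> h - gradL x \<bullet> h = (gradL (x + \<theta> *\<^sub>R h) - gradL x) \<bullet> h"
      by (simp add: inner_diff_left)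
    also have "\<dots> \<le> norm (gradL (x + \<theta> *\<^sub>R h) - gradL x) * norm h" by (rule norm_cauchy_schwarz)
    also have "\<dots> \<le> (M * norm (\<theta> *\<^sub>R h)) * norm h"
      using lip[of "x + \<theta> *\<^sub>R h" x] by (intro mult_right_mono) auto
    also have "\<dots> = M*\<theta>*(h\<bullet>h)" using that by (simp add: power2_norm_eq_inner[symmetric] power2_eq_square)
    finally show ?thesis by simp
  qed
  have "\<phi> 1 \<le> \<phi> 0"
    apply (rule DERIV_nonpos_imp_decreasing_open[of 0 1])
    apply simp
    subgoal for \<theta> using d[of \<theta>] nonpos[of \<theta>] by auto
    apply (rule continuous_at_imp_continuous_on)
    using d DERIV_isCont by blast
  then show ?thesis by (simp add: \<phi>_def)
qed

lemma tangent:
  fixes L :: "'a::real_inner \<Rightarrow> real" and gradL :: "'a \<Rightarrow> 'a"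
  assumes grad: "\<And>x. (L has_derivative (\<lambda>h. gradL x \<bullet> h)) (at x)"
    and conv: "convex_on UNIV L"
  shows "L x + gradL x \<bullet> (y - x) \<le> L y"
proof -
  define \<phi> where "\<phi> \<theta> = L (x + \<theta> *\<^sub>R (y - x))" for \<theta>
  have d: "(\<phi> has_real_derivative (gradL x \<bullet> (y - x))) (at 0)"
  proof -
    have "((\<lambda>\<theta>. L (x + \<theta> *\<^sub>R (y-x))) has_derivative (\<lambda>k. gradL (x + 0 *\<^sub>R (y-x)) \<bullet> (k *\<^sub>R (y-x)))) (at 0)"
      by (rule has_derivative_compose[OF _ grad]) (auto intro!: derivative_eq_intros)
    then show ?thesis unfolding \<phi>_def has_field_derivative_def
      by (rule has_derivative_eq_rhs) (auto simp: fun_eq_iff algebra_simps)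
  qed
  have cv: "convex_on UNIV \<phi>"
  proof (rule convex_onI)
    fix t a b :: real assume "0 < t" "t < 1"
    have "\<phi> ((1 - t) *\<^sub>R a + t *\<^sub>R b) = L ((1-t) *\<^sub>R (x + a *\<^sub>R (y-x)) + t *\<^sub>R (x + b *\<^sub>R (y-x)))"
      by (simp add: \<phi>_def algebra_simps)
    also have "\<dots> \<le> (1-t) * L (x + a *\<^sub>R (y-x)) + t * L (x + b *\<^sub>R (y-x))"
      using convex_onD[OF conv] \<open>0<t\<close> \<open>t<1\<close> by simp
    finally show "\<phi> ((1 - t) *\<^sub>R a + t *\<^sub>R b) \<le> (1 - t) * \<phi> a + t * \<phi> b" by (simp add: \<phi>_def)
  qed simp
  have "\<phi> 1 - \<phi> 0 \<ge> (gradL x \<bullet> (y - x)) * (1 - 0)"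
    by (rule convex_on_imp_above_tangent[OF cv]) (auto intro: has_field_derivative_at_within[OF d])
  then show ?thesis by (simp add: \<phi>_def)
qed

definition "AA c s = c* (s\<^sup>2/4+s)"
definition "B1 (s::real) = (1 + 3/s)/2"
definition "B2 (s::real) = s/2 + 1"
definition "B3 (s::real) = s^2/8 + (3* s)/8 - 1/4 + 9/(2* s)"
definition "bt (s::real) = 1 - 3/s"

definition EE :: "('a::real_inner \<Rightarrow> real) \<Rightarrow> 'a \<Rightarrow> real \<Rightarrow> real \<Rightarrow> 'a \<Rightarrow> 'a \<Rightarrow> real" where
  "EE L zs c s p u = AA c s * (L (zs + p + bt s *\<^sub>R u) - L zs) + B1 s * (p \<bullet> p) + B2 s * (p \<bullet> u) + B3 s * (u \<bullet> u)"

lemma inner_vd: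
  fixes f g :: "real \<Rightarrow> 'a::real_inner"
  assumes "(f has_vector_derivative f') (at t within J)" "(g has_vector_derivative g') (at t within J)"
  shows "((\<lambda>t. f t \<bullet> g t) has_real_derivative (f t \<bullet> g' + f' \<bullet> g t)) (at t within J)"
  using has_derivative_inner[OF assms[unfolded has_vector_derivative_def]]
  unfolding has_field_derivative_def
  by (rule has_derivative_eq_rhs) (simp add: fun_eq_iff algebra_simps)

lemma L_vd:
  fixes L :: "'a::real_inner \<Rightarrow> real" and gradL :: "'a \<Rightarrow> 'a"
  assumes grad: "\<And>x. (L has_derivative (\<lambda>h. gradL x \<bullet> h)) (at x)"
    and "(f has_vector_derivative f') (at t within J)"
  shows "((\<lambda>t. L (f t)) has_real_derivative (gradL (f t) \<bullet> f')) (at t within J)"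
  using has_derivative_compose[OF assms(2)[unfolded has_vector_derivative_def] grad]
  unfolding has_field_derivative_def
  by (rule has_derivative_eq_rhs) (simp add: fun_eq_iff algebra_simps)

lemma EE_deriv:
  fixes L :: "'a::real_inner \<Rightarrow> real" and gradL :: "'a \<Rightarrow> 'a"
  assumes grad: "\<And>x. (L has_derivative (\<lambda>h. gradL x \<bullet> h)) (at x)"
    and dp: "(p has_vector_derivative u t) (at t within J)"
    and du: "(u has_vector_derivative ud) (at t within J)"
    and t: "t \<ge> 0"
  shows "((\<lambda>t. EE L zs c (t+2) (p t) (u t)) has_real_derivative
     (c*((t+2)/2+1) * (L (zs + p t + bt (t+2) *\<^sub>R u t) - L zs)
      + AA c (t+2) * (gradL (zs + p t + bt (t+2) *\<^sub>R u t) \<bullet> (u t + (3/(t+2)^2) *\<^sub>R u t + bt (t+2) *\<^sub>R ud))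
      + (- 3/(2*(t+2)^2)) * (p t \<bullet> p t) + B1 (t+2) * (2*(p t \<bullet> u t))
      + 1/2 * (p t \<bullet> u t) + B2 (t+2) * (u t \<bullet> u t + p t \<bullet> ud)
      + ((t+2)/4 + 3/8 - 9/(2*(t+2)^2)) * (u t \<bullet> u t) + B3 (t+2) * (2 * (u t \<bullet> ud)))) (at t within J)"
proof -
  have t2: "t + 2 \<noteq> 0" using t by simp
  have dA: "((\<lambda>t. AA c (t+2)) has_real_derivative c*((t+2)/2+1)) (at t within J)"
    unfolding AA_def by (auto intro!: derivative_eq_intros simp: field_simps power2_eq_square)
  have dB1: "((\<lambda>t. B1 (t+2)) has_real_derivative (- 3/(2*(t+2)^2))) (at t within J)"
    unfolding B1_def using t2 apply (auto intro!: derivative_eq_intros simp: power2_eq_square)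
    done
  have dB2: "((\<lambda>t. B2 (t+2)) has_real_derivative 1/2) (at t within J)"
    unfolding B2_def using t by (auto intro!: derivative_eq_intros simp: field_simps power2_eq_square)
  have dB3: "((\<lambda>t. B3 (t+2)) has_real_derivative ((t+2)/4 + 3/8 - 9/(2*(t+2)^2))) (at t within J)"
    unfolding B3_def using t2 apply (auto intro!: derivative_eq_intros simp: power2_eq_square)
    proof -
      have e: "(2*t+4)*(2*t+4) = 4*((t+2)*(t+2))" by algebra
      show "(16 * t + 32) / 64 - 18 / ((2 * t + 4) * (2 * t + 4)) = (t + 2) / 4 - 9 / (2 * ((t + 2) * (t + 2)))"
        unfolding e by simp
    qed
  note dB3 = this
  have dbt: "((\<lambda>t. bt (t+2)) has_real_derivative 3/(t+2)^2) (at t within J)"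
    unfolding bt_def using t2 apply (auto intro!: derivative_eq_intros simp: power2_eq_square)
    done
  have dy: "((\<lambda>t. zs + p t + bt (t+2) *\<^sub>R u t) has_vector_derivative
       (u t + (3/(t+2)^2) *\<^sub>R u t + bt (t+2) *\<^sub>R ud)) (at t within J)"
    using dbt dp du
    by (auto intro!: derivative_eq_intros simp: has_real_derivative_iff_has_vector_derivative algebra_simps)
  have dLy: "((\<lambda>t. L (zs + p t + bt (t+2) *\<^sub>R u t) - L zs) has_real_derivative
       gradL (zs + p t + bt (t+2) *\<^sub>R u t) \<bullet> (u t + (3/(t+2)^2) *\<^sub>R u t + bt (t+2) *\<^sub>R ud)) (at t within J)"
    using L_vd[OF grad dy] by (auto intro!: derivative_eq_intros)
  have dP: "((\<lambda>t. p t \<bullet> p t) has_real_derivative 2*(p t \<bullet> u t)) (at t within J)"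
    using inner_vd[OF dp dp] by (simp add: inner_commute)
  have dX: "((\<lambda>t. p t \<bullet> u t) has_real_derivative (u t \<bullet> u t + p t \<bullet> ud)) (at t within J)"
    using inner_vd[OF dp du] by (simp add: inner_commute add.commute)
  have dU: "((\<lambda>t. u t \<bullet> u t) has_real_derivative 2*(u t \<bullet> ud)) (at t within J)"
    using inner_vd[OF du du] by (simp add: inner_commute)
  show ?thesis
    unfolding EE_def
    apply (rule DERIV_cong)
     apply (rule DERIV_add DERIV_mult dA dB1 dB2 dB3 dLy dP dX dU)+
    by (simp add: algebra_simps)
qed

lemma scalar_ineq:
  fixes s c Ly P X U G H N :: real
  assumes s: "s \<ge> 2" and c: "c \<ge> 0" and cv: "H + bt s * G \<ge> Ly" and P: "P \<ge> 0" and U: "U \<ge> 0"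
  shows "c*(s/2+1) * Ly + AA c s * (G + (3/s^2) * G + bt s * (-(3/s) * G - c * N))
      + (- 3/(2* s^2)) * P + B1 s * (2*X)
      + 1/2 * X + B2 s * (U + (-(3/s) * X - c * H))
      + (s/4 + 3/8 - 9/(2* s^2)) * U + B3 s * (2 * (-(3/s) * U - c * G))
   \<le> - AA c s * c * bt s * N"
proof -
  have s0: "s \<noteq> 0" using s by simp
  have eq: "c*(s/2+1) * Ly + AA c s * (G + (3/s^2) * G + bt s * (-(3/s) * G - c * N))
      + (- 3/(2* s^2)) * P + B1 s * (2*X)
      + 1/2 * X + B2 s * (U + (-(3/s) * X - c * H))
      + (s/4 + 3/8 - 9/(2* s^2)) * U + B3 s * (2 * (-(3/s) * U - c * G))
    = - AA c s * c * bt s * N - c * B2 s * (H + bt s * G - Ly) - 3/(2* s^2) * P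
      + (-7/8 + 3/(2* s) - 63/(2* s^2)) * U"
    unfolding AA_def B1_def B2_def B3_def bt_def using s0
    by (simp add: field_simps power2_eq_square)
  have "- c * B2 s * (H + bt s * G - Ly) \<le> 0"
    using c cv s unfolding B2_def by (simp add: mult_nonneg_nonneg)
  moreover have "- 3/(2* s^2) * P \<le> 0" using P by (simp add: divide_nonpos_nonneg)
  moreover have "(-7/8 + 3/(2* s) - 63/(2* s^2)) * U \<le> 0"
  proof -
    have "3/(2* s) \<le> 3/4" using s by (simp add: field_simps)
    moreover have "63/(2* s^2) \<ge> 0" by simp
    ultimately have "-7/8 + 3/(2* s) - 63/(2* s^2) \<le> 0" by linarith
    then show ?thesis using U by (simp add: mult_nonpos_nonneg)
  qed
  ultimately show ?thesis unfolding eq by linarith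
qed

lemma Q_lower:
  fixes s P X U W :: real
  assumes s: "s \<ge> 2" and U: "U \<ge> 0"
    and W: "W = (1+3/s)^2 * P + 2*(s/2+1)*(1+3/s) * X + (s/2+1)^2 * U" and W0: "W \<ge> 0"
  shows "B1 s * P + B2 s * X + B3 s * U \<ge> (s/10) * U"
proof -
  define K where "K = (1+3/s)*(2*B3 s) - (s/2+1)^2"
  have s0: "s > 0" using s by simp
  have e1: "(1+3/s) * (2*(B1 s * P + B2 s * X + B3 s * U)) = W + K * U"
    unfolding W K_def B1_def B2_def B3_def using s0 by (simp add: field_simps power2_eq_square)
  have sK: "s^2 * K = s^3/2 + 3 * s^2/4 + 15 * s/2 + 27"
    unfolding K_def B3_def using s0 by (simp add: field_simps power2_eq_square power3_eq_cube)
  have "s^2 * K \<ge> s^2 * ((s/5) * (1+3/s))"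
    unfolding sK using s0 by (simp add: field_simps power2_eq_square power3_eq_cube)
  hence K: "K \<ge> (s/5) * (1+3/s)" using s0 by (simp add: mult_le_cancel_left)
  have "(1+3/s) * (2*(B1 s * P + B2 s * X + B3 s * U)) \<ge> (1+3/s) * (2*((s/10) * U))"
  proof -
    have "K * U \<ge> (s/5) * (1+3/s) * U" using mult_right_mono[OF K U] by simp
    then show ?thesis unfolding e1 using W0 by (simp add: field_simps)
  qed
  moreover have "1 + 3/s > 0" using s0 by (simp add: add_pos_pos)
  ultimately have "2*((s/10)*U) \<le> 2*(B1 s * P + B2 s * X + B3 s * U)"
    using mult_le_cancel_left_pos[of "1+3/s"] by blast
  thus ?thesis by (simp add: mult.commute)
qed


lemma grad_bound:
  fixes L :: "'a::real_inner \<Rightarrow> real" and gradL :: "'a \<Rightarrow> 'a"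
  assumes grad: "\<And>x. (L has_derivative (\<lambda>h. gradL x \<bullet> h)) (at x)"
    and lip: "\<And>x y. norm (gradL x - gradL y) \<le> M * norm (x - y)"
    and M: "M > 0" and minim: "\<forall>y. L zs \<le> L y"
  shows "gradL y \<bullet> gradL y \<le> 2 * M * (L y - L zs)"
proof -
  have "L (y + (-(1/M)) *\<^sub>R gradL y) \<le> L y + gradL y \<bullet> ((-(1/M)) *\<^sub>R gradL y) + M/2 * (((-(1/M)) *\<^sub>R gradL y) \<bullet> ((-(1/M)) *\<^sub>R gradL y))"
    by (rule descent[OF grad lip])
  also have "\<dots> = L y - (gradL y \<bullet> gradL y) / (2*M)"
    using M by (simp add: field_simps power2_eq_square)
  finally have "L zs \<le> L y - (gradL y \<bullet> gradL y) / (2*M)" using minim by (meson order_trans)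
  then show ?thesis using M by (simp add: field_simps)
qed


lemma final_scalar:
  fixes s c M Ly U N Lz D E1 :: real
  assumes s: "s \<ge> 3" and c: "c > 0" and M: "M > 0" and Ly: "Ly \<ge> 0" and U: "U \<ge> 0"
    and N: "N \<le> 2*M*Ly" and E: "AA c s * Ly + (s/10) * U \<le> E1"
    and Lz: "Lz \<le> Ly + D + (M/2) * U" and D: "2 * D \<le> s * N + U / s"
  shows "c * Lz \<le> (4 + 4*M + 5*c + 5*c*M) * E1 / s"
proof -
  have s0: "s > 0" using s by simp
  have AA: "AA c s \<ge> c * s^2 / 4" unfolding AA_def using c s0 by (simp add: field_simps)
  have "c * s^2 / 4 * Ly \<le> AA c s * Ly" using AA Ly by (rule mult_right_mono)
  moreover have "(s/10) * U \<ge> 0" using U s0 by simp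
  moreover have "c * s^2 * Ly = 4 * (c * s^2 / 4 * Ly)" by simp
  ultimately have h1: "c * s^2 * Ly \<le> 4 * E1" using E by linarith
  have "c * s^2 / 4 \<ge> 0" using c by simp
  hence "AA c s \<ge> 0" using AA by linarith
  hence "AA c s * Ly \<ge> 0" using Ly by simp
  moreover have "(s/10) * U = s * U / 10" by simp
  ultimately have h2: "s * U \<le> 10 * E1" using E by linarith
  have "s * U \<ge> 0" using U s0 by simp
  hence E1: "E1 \<ge> 0" using h2 by linarith
  have "s * (c * Lz) \<le> s * (c * (Ly + D + (M/2) * U))" using Lz c s0 by simp
  also have "\<dots> = c * s * Ly + c * s * D + c * M / 2 * (s * U)" by (simp add: algebra_simps)
  also have "\<dots> \<le> c * s * Ly + c * (s^2 * N + U) / 2 + c * M / 2 * (s * U)"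
  proof -
    have "s * (2*D) \<le> s * (s * N + U / s)" using D s0 by simp
    moreover have "s * (s * N + U / s) = s^2 * N + U" using s0 by (simp add: field_simps power2_eq_square)
    ultimately have "s * D \<le> (s^2 * N + U)/2" by (simp add: algebra_simps)
    hence "c * (s * D) \<le> c * ((s^2 * N + U)/2)" using c by (simp add: mult_left_mono)
    thus ?thesis by (simp add: algebra_simps)
  qed
  also have "\<dots> \<le> 4 * E1 + c * (s^2 * (2*M*Ly) + U) / 2 + c * M / 2 * (10 * E1)"
  proof -
    have "c * s * Ly \<le> c * s^2 * Ly" using c s Ly by (simp add: power2_eq_square mult_right_mono mult_left_mono)
    moreover have "s^2 * N \<le> s^2 * (2*M*Ly)" using N by (simp add: mult_left_mono)
    moreover have "c * M / 2 * (s * U) \<le> c * M / 2 * (10 * E1)" using h2 c M by (simp add: mult_left_mono)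
    moreover have "c * (s^2 * N + U) / 2 \<le> c * (s^2 * (2*M*Ly) + U) / 2"
      using \<open>s^2 * N \<le> s^2 * (2*M*Ly)\<close> c by (simp add: mult_left_mono divide_right_mono)
    ultimately show ?thesis using h1 by linarith
  qed
  also have "\<dots> = 4 * E1 + M * (c * s^2 * Ly) + c * U / 2 + 5 * c * M * E1" by (simp add: algebra_simps)
  also have "\<dots> \<le> 4 * E1 + M * (4 * E1) + c * (10*E1) / 2 + 5 * c * M * E1"
  proof -
    have "M * (c * s^2 * Ly) \<le> M * (4*E1)" using h1 M by simp
    moreover have "U \<le> s * U" using s U by (simp add: mult_right_mono[of 1 s U, simplified])
    hence "U \<le> 10 * E1" using h2 by linarith
    hence "c * U / 2 \<le> c * (10*E1) / 2" using c by simp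
    ultimately show ?thesis by linarith
  qed
  also have "\<dots> = (4 + 4*M + 5*c + 5*c*M) * E1" by (simp add: algebra_simps)
  finally have "s * (c * Lz) \<le> (4 + 4*M + 5*c + 5*c*M) * E1" .
  then show ?thesis using s0 by (simp add: field_simps)
qed


lemma mono_J:
  fixes f f' :: "real \<Rightarrow> real"
  assumes J: "is_interval J" and a: "a \<in> J" and b: "b \<in> J" and ab: "a \<le> b"
    and d: "\<And>x. x \<in> J \<Longrightarrow> (f has_real_derivative f' x) (at x within J)"
    and n: "\<And>x. a < x \<Longrightarrow> x < b \<Longrightarrow> f' x \<le> 0"
  shows "f b \<le> f a"
proof -
  have sub: "{a..b} \<subseteq> J"
  proof
    fix x assume "x \<in> {a..b}"
    have "\<forall>a\<in>J. \<forall>b\<in>J. \<forall>x. a \<le> x \<and> x \<le> b \<longrightarrow> x \<in> J" using J is_interval_1 by blast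
    moreover have "a \<le> x \<and> x \<le> b" using \<open>x \<in> {a..b}\<close> by simp
    ultimately show "x \<in> J" using a b by blast
  qed
  show ?thesis
  proof (rule DERIV_nonpos_imp_decreasing_open[OF ab])
    fix x assume x: "a < x" "x < b"
    have "x \<in> interior {a..b}" using x by simp
    hence "x \<in> interior J" using interior_mono[OF sub] by blast
    hence e: "at x within J = at x" by (rule at_within_interior)
    have "x \<in> J" using sub x by auto
    hence "(f has_real_derivative f' x) (at x)" using d[of x] unfolding e by blast
    then show "\<exists>y. (f has_real_derivative y) (at x) \<and> y \<le> 0" using n[OF x] by blast
  next
    have "continuous_on J f"
      unfolding continuous_on_eq_continuous_within
    proof
      fix x assume "x \<in> J"
      show "continuous (at x within J) f" by (rule DERIV_continuous[OF d[OF \<open>x \<in> J\<close>]])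
    qed
    then show "continuous_on {a..b} f" using sub by (rule continuous_on_subset)
  qed
qed

lemma sq_exp:
  fixes p u :: "'a::real_inner"
  shows "(a *\<^sub>R p + b *\<^sub>R u) \<bullet> (a *\<^sub>R p + b *\<^sub>R u) = a^2 * (p \<bullet> p) + 2*b*a * (p \<bullet> u) + b^2 * (u \<bullet> u)"
  by (simp add: inner_add_right inner_add_left inner_commute power2_eq_square algebra_simps)

lemma traj:
  fixes L :: "real^'n \<Rightarrow> real" and gradL :: "real^'n \<Rightarrow> real^'n" and zs :: "real^'n"
    and M zeta c :: real
  assumes grad: "\<And>x. (L has_derivative (\<lambda>h. gradL x \<bullet> h)) (at x)"
    and conv: "convex_on UNIV L"
    and minim: "\<forall>y. L zs \<le> L y"
    and M: "M > 0"
    and lip: "\<And>x y. norm (gradL x - gradL y) \<le> M * norm (x - y)"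
    and c: "c = zeta\<^sup>2 / M" and zeta: "zeta > 0"
    and sol: "is_solution zeta M gradL J z1 z2 tau" and tau0: "tau 0 = 0"
    and T: "T \<in> J" "T \<ge> 1"
  shows "c * (L (z1 T) - L zs) \<le> (4 + 4*M + 5*c + 5*c*M) * (exp (c*M) * EE L zs c 2 (z1 0 - zs) (z2 0)) / (T+2)"
proof -
  have cpos: "c > 0" using c zeta M by simp
  have J: "is_interval J" and J0: "0 \<in> J" using sol unfolding is_solution_def by auto
  have sol': "\<And>t. t \<in> J \<Longrightarrow> tau t \<ge> 0 \<and>
        (z1 has_vector_derivative z2 t) (at t within J) \<and>
        (z2 has_vector_derivative
           (- (2 * dbar (tau t)) *\<^sub>R z2 t
            - (zeta\<^sup>2 / M) *\<^sub>R gradL (z1 t + betabar (tau t) *\<^sub>R z2 t))) (at t within J) \<and>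
        (tau has_vector_derivative 1) (at t within J)"
    using sol unfolding is_solution_def by blast
  have tau_eq: "tau t = t" if "t \<in> J" for t
  proof -
    have "\<And>x. x \<in> J \<Longrightarrow> ((\<lambda>t. tau t - t) has_real_derivative 0) (at x within J)"
    proof -
      fix x assume "x \<in> J"
      then have "(tau has_real_derivative 1) (at x within J)"
        using sol' has_real_derivative_iff_has_vector_derivative by blast
      then show "((\<lambda>t. tau t - t) has_real_derivative 0) (at x within J)"
        by (auto intro!: derivative_eq_intros)
    qed
    then obtain k where k: "\<forall>x\<in>J. tau x - x = k"
      using has_field_derivative_zero_constant[OF is_interval_convex[OF J]] by blast
    have "tau 0 - 0 = k" using k J0 by blast
    hence "k = 0" using tau0 by simp
    then show ?thesis using k that by auto
  qed
  have Jnn: "t \<ge> 0" if "t \<in> J" for t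
  proof -
    have "tau t \<ge> 0" using sol'[OF that] by blast
    then show ?thesis using tau_eq[OF that] by simp
  qed
  have Jint: "\<forall>a\<in>J. \<forall>b\<in>J. \<forall>x. a \<le> x \<and> x \<le> b \<longrightarrow> x \<in> J" using J is_interval_1 by blast
  have J1: "1 \<in> J" using Jint[rule_format, OF J0 T(1), of 1] T(2) by simp
  define p where "p t = z1 t - zs" for t
  define u where "u = z2"
  define y where "y t = zs + p t + bt (t+2) *\<^sub>R u t" for t
  define g where "g t = gradL (y t)" for t
  define ud where "ud t = -(3/(t+2)) *\<^sub>R u t - c *\<^sub>R g t" for t
  define e where "e t = EE L zs c (t+2) (p t) (u t)" for t
  define De where "De t = c*((t+2)/2+1) * (L (zs + p t + bt (t+2) *\<^sub>R u t) - L zs)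
      + AA c (t+2) * (gradL (zs + p t + bt (t+2) *\<^sub>R u t) \<bullet> (u t + (3/(t+2)^2) *\<^sub>R u t + bt (t+2) *\<^sub>R ud t))
      + (- 3/(2*(t+2)^2)) * (p t \<bullet> p t) + B1 (t+2) * (2*(p t \<bullet> u t))
      + 1/2 * (p t \<bullet> u t) + B2 (t+2) * (u t \<bullet> u t + p t \<bullet> ud t)
      + ((t+2)/4 + 3/8 - 9/(2*(t+2)^2)) * (u t \<bullet> u t) + B3 (t+2) * (2 * (u t \<bullet> ud t))" for t
  have bb: "betabar t = bt (t+2)" if "t \<ge> 0" for t
    unfolding betabar_def bt_def using that by (simp add: field_simps)
  have yz: "y t = z1 t + betabar t *\<^sub>R z2 t" if "t \<ge> 0" for t
    unfolding y_def p_def u_def using bb[OF that] by simp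
  have dp: "(p has_vector_derivative u t) (at t within J)" if "t \<in> J" for t
    unfolding p_def u_def using sol'[OF that] by (auto intro!: derivative_eq_intros)
  have du: "(u has_vector_derivative ud t) (at t within J)" if "t \<in> J" for t
  proof -
    have "- (2 * dbar (tau t)) *\<^sub>R z2 t - (zeta\<^sup>2 / M) *\<^sub>R gradL (z1 t + betabar (tau t) *\<^sub>R z2 t) = ud t"
      unfolding ud_def g_def tau_eq[OF that] yz[OF Jnn[OF that]] c[symmetric] dbar_def u_def
      using Jnn[OF that] by (simp add: field_simps)
    then show ?thesis using sol'[OF that] unfolding u_def by simp
  qed
  have de: "(e has_real_derivative De t) (at t within J)" if "t \<in> J" for t
    unfolding e_def De_def by (rule EE_deriv[OF grad dp[OF that] du[OF that] Jnn[OF that]])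
  define Ly where "Ly t = L (y t) - L zs" for t
  have Ly0: "Ly t \<ge> 0" for t unfolding Ly_def using minim by simp
  have Nb: "g t \<bullet> g t \<le> 2 * M * Ly t" for t
    unfolding g_def Ly_def by (rule grad_bound[OF grad lip M minim])
  have cG: "u t \<bullet> g t = g t \<bullet> u t" for t by (rule inner_commute)
  have cH: "p t \<bullet> g t = g t \<bullet> p t" for t by (rule inner_commute)
  have cvx: "g t \<bullet> p t + bt (t+2) * (g t \<bullet> u t) \<ge> Ly t" for t
  proof -
    have "L (y t) + gradL (y t) \<bullet> (zs - y t) \<le> L zs" by (rule tangent[OF grad conv])
    moreover have "g t \<bullet> (zs - y t) = - (g t \<bullet> p t + bt (t+2) * (g t \<bullet> u t))"
      unfolding y_def by (simp add: inner_diff_right inner_add_right)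
    ultimately show ?thesis unfolding Ly_def g_def by simp
  qed
  have Deb: "De t \<le> - AA c (t+2) * c * bt (t+2) * (g t \<bullet> g t)" if "t \<in> J" for t
  proof -
    have eq: "De t = c*((t+2)/2+1) * Ly t + AA c (t+2) * ((g t \<bullet> u t) + (3/(t+2)^2) * (g t \<bullet> u t) + bt (t+2) * (-(3/(t+2)) * (g t \<bullet> u t) - c * (g t \<bullet> g t)))
      + (- 3/(2*(t+2)^2)) * (p t \<bullet> p t) + B1 (t+2) * (2*(p t \<bullet> u t))
      + 1/2 * (p t \<bullet> u t) + B2 (t+2) * (u t \<bullet> u t + (-(3/(t+2)) * (p t \<bullet> u t) - c * (g t \<bullet> p t)))
      + ((t+2)/4 + 3/8 - 9/(2*(t+2)^2)) * (u t \<bullet> u t) + B3 (t+2) * (2 * (-(3/(t+2)) * (u t \<bullet> u t) - c * (g t \<bullet> u t)))"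
      unfolding De_def ud_def Ly_def y_def[symmetric] g_def[symmetric]
      by (simp add: inner_add_right inner_diff_right inner_scaleR_right inner_minus_right inner_commute)
    show ?thesis unfolding eq
      using Jnn[OF that] cpos cvx[of t]
      by (intro scalar_ineq) (auto simp: inner_ge_zero)
  qed
  have elow: "e t \<ge> AA c (t+2) * Ly t + ((t+2)/10) * (u t \<bullet> u t)" if "t \<ge> 0" for t
  proof -
    define w where "w = (1+3/(t+2)) *\<^sub>R p t + ((t+2)/2+1) *\<^sub>R u t"
    have W: "w \<bullet> w = (1+3/(t+2))^2 * (p t \<bullet> p t) + 2*((t+2)/2+1)*(1+3/(t+2)) * (p t \<bullet> u t) + ((t+2)/2+1)^2 * (u t \<bullet> u t)"
      unfolding w_def sq_exp by (simp add: algebra_simps)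
    have "B1 (t+2) * (p t \<bullet> p t) + B2 (t+2) * (p t \<bullet> u t) + B3 (t+2) * (u t \<bullet> u t) \<ge> ((t+2)/10) * (u t \<bullet> u t)"
      by (rule Q_lower[OF _ _ W]) (use that in \<open>auto simp: inner_ge_zero\<close>)
    then show ?thesis unfolding e_def EE_def Ly_def y_def by simp
  qed
  have AAnn: "AA c (t+2) \<ge> 0" if "t \<ge> 0" for t unfolding AA_def using cpos that by simp
  have De_le: "De t \<le> c * M * e t" if "t \<in> J" for t
  proof -
    have t0: "t \<ge> 0" using Jnn[OF that] .
    have bth: "- bt (t+2) \<le> 1/2" unfolding bt_def using t0 by (simp add: field_simps)
    have N0: "g t \<bullet> g t \<ge> 0" by (simp add: inner_ge_zero)
    have "- AA c (t+2) * c * bt (t+2) * (g t \<bullet> g t) = (AA c (t+2) * c * (g t \<bullet> g t)) * (- bt (t+2))" by simp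
    also have "\<dots> \<le> (AA c (t+2) * c * (g t \<bullet> g t)) * (1/2)"
      using bth AAnn[OF t0] cpos N0 by (intro mult_left_mono) auto
    also have "\<dots> \<le> (AA c (t+2) * c * (2 * M * Ly t)) * (1/2)"
      using Nb[of t] AAnn[OF t0] cpos by (intro mult_right_mono mult_left_mono) auto
    also have "\<dots> = c * M * (AA c (t+2) * Ly t)" by simp
    also have "\<dots> \<le> c * M * e t"
    proof -
      have "((t+2)/10) * (u t \<bullet> u t) \<ge> 0" using t0 by (simp add: inner_ge_zero)
      then have "AA c (t+2) * Ly t \<le> e t" using elow[OF t0] by linarith
      then show ?thesis using cpos M by simp
    qed
    finally show ?thesis using Deb[OF that] by linarith
  qed
  have De_nonpos: "De t \<le> 0" if "t \<in> J" "t \<ge> 1" for t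
  proof -
    have "bt (t+2) \<ge> 0" unfolding bt_def using that by (simp add: field_simps)
    then have "AA c (t+2) * c * bt (t+2) * (g t \<bullet> g t) \<ge> 0"
      using AAnn[of t] that cpos by (simp add: inner_ge_zero)
    then show ?thesis using Deb[OF that(1)] by linarith
  qed
  define f where "f t = e t * exp (- (c*M) * t)" for t
  have df: "(f has_real_derivative (De t * exp (- (c*M) * t) + e t * (exp (- (c*M) * t) * (- (c*M))))) (at t within J)"
    if "t \<in> J" for t
  proof -
    have dexp: "((\<lambda>t. exp (- (c*M) * t)) has_real_derivative exp (- (c*M) * t) * (- (c*M))) (at t within J)"
      by (rule derivative_eq_intros refl)+ simp
    show ?thesis unfolding f_def using DERIV_mult[OF de[OF that] dexp] by (simp add: algebra_simps)
  qed
  have "f 1 \<le> f 0"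
  proof (rule mono_J[OF J J0 J1 _ df])
    fix x :: real assume x: "0 < x" "x < 1"
    have xJ: "x \<in> J" using Jint[rule_format, OF J0 J1, of x] x by simp
    have "De x * exp (- (c*M) * x) \<le> (c * M * e x) * exp (- (c*M) * x)"
      using De_le[OF xJ] by (intro mult_right_mono) auto
    then show "De x * exp (- (c*M) * x) + e x * (exp (- (c*M) * x) * (- (c*M))) \<le> 0"
      by (simp add: algebra_simps)
  qed auto
  then have e1: "e 1 \<le> exp (c*M) * e 0"
    unfolding f_def by (simp add: exp_minus field_simps)
  have "e T \<le> e 1"
  proof (rule mono_J[OF J J1 T(1) T(2) de])
    fix x :: real assume x: "1 < x" "x < T"
    have xJ: "x \<in> J" using Jint[rule_format, OF J1 T(1), of x] x by simp
    show "De x \<le> 0" using De_nonpos[OF xJ] x by simp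
  qed auto
  then have eT: "e T \<le> exp (c*M) * e 0" using e1 by linarith
  define s where "s = T + 2"
  have s3: "s \<ge> 3" unfolding s_def using T by simp
  have bt01: "0 \<le> bt s" "bt s \<le> 1" unfolding bt_def using s3 by (auto simp: field_simps)
  have T0: "T \<ge> 0" using T by simp
  have E: "AA c s * Ly T + (s/10) * (u T \<bullet> u T) \<le> exp (c*M) * e 0"
    using elow[OF T0] eT unfolding s_def by linarith
  have Lz: "L (z1 T) - L zs \<le> Ly T + (- bt s * (g T \<bullet> u T)) + (M/2) * (u T \<bullet> u T)"
  proof -
    have "L (y T + (- bt s) *\<^sub>R u T) \<le> L (y T) + gradL (y T) \<bullet> ((- bt s) *\<^sub>R u T) + M/2 * (((- bt s) *\<^sub>R u T) \<bullet> ((- bt s) *\<^sub>R u T))"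
      by (rule descent[OF grad lip])
    moreover have "y T + (- bt s) *\<^sub>R u T = z1 T" unfolding y_def p_def s_def by simp
    moreover have "M/2 * (((- bt s) *\<^sub>R u T) \<bullet> ((- bt s) *\<^sub>R u T)) \<le> (M/2) * (u T \<bullet> u T)"
    proof -
      have "(bt s)^2 \<le> 1" using bt01 by (simp add: power_le_one)
      then have "(bt s)^2 * (u T \<bullet> u T) \<le> 1 * (u T \<bullet> u T)" by (intro mult_right_mono) (auto simp: inner_ge_zero)
      then show ?thesis using M by (simp add: power2_eq_square algebra_simps)
    qed
    ultimately show ?thesis unfolding Ly_def g_def by simp
  qed
  have Dle: "2 * (- bt s * (g T \<bullet> u T)) \<le> s * (g T \<bullet> g T) + (u T \<bullet> u T) / s"
  proof -
    have "(s *\<^sub>R g T + bt s *\<^sub>R u T) \<bullet> (s *\<^sub>R g T + bt s *\<^sub>R u T) \<ge> 0" by (simp add: inner_ge_zero)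
    then have h: "s^2 * (g T \<bullet> g T) + 2 * bt s * s * (g T \<bullet> u T) + (bt s)^2 * (u T \<bullet> u T) \<ge> 0"
      unfolding sq_exp by simp
    have "(bt s)^2 * (u T \<bullet> u T) \<le> 1 * (u T \<bullet> u T)"
      using bt01 by (intro mult_right_mono) (auto simp: inner_ge_zero power_le_one)
    then have k: "- (2 * bt s * s * (g T \<bullet> u T)) \<le> s^2 * (g T \<bullet> g T) + (u T \<bullet> u T)"
      using h by linarith
    have k1: "s * (2 * (- bt s * (g T \<bullet> u T))) = - (2 * bt s * s * (g T \<bullet> u T))" by (simp add: algebra_simps)
    have k2: "s * (s * (g T \<bullet> g T) + (u T \<bullet> u T) / s) = s^2 * (g T \<bullet> g T) + (u T \<bullet> u T)"
      using s3 by (simp add: field_simps power2_eq_square)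
    have "s * (2 * (- bt s * (g T \<bullet> u T))) \<le> s * (s * (g T \<bullet> g T) + (u T \<bullet> u T) / s)"
      unfolding k1 k2 by (rule k)
    moreover have "s > 0" using s3 by simp
    ultimately show ?thesis by (rule mult_le_cancel_left_pos[THEN iffD1, rotated])
  qed
  have fin: "c * (L (z1 T) - L zs) \<le> (4 + 4*M + 5*c + 5*c*M) * (exp (c*M) * e 0) / s"
    by (rule final_scalar[OF s3 cpos M Ly0 _ Nb E Lz Dle]) (simp add: inner_ge_zero)
  have "e 0 = EE L zs c 2 (z1 0 - zs) (z2 0)" unfolding e_def p_def u_def by simp
  then show ?thesis using fin unfolding s_def by simp
qed

theorem proposition5p6:
  fixes L :: "real^'n \<Rightarrow> real"
    and gradL :: "real^'n \<Rightarrow> real^'n"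
    and M zeta :: real
    and zstar :: "real^'n"
  assumes grad: "\<And>x. (L has_derivative (\<lambda>h. gradL x \<bullet> h)) (at x)"
    and C1: "continuous_on UNIV gradL"
    and conv: "convex_on UNIV L"
    and minimizer: "\<forall>y. L zstar \<le> L y"
    and unique: "\<And>z. (\<forall>y. L z \<le> L y) \<Longrightarrow> z = zstar"
    and Mpos: "M > 0"
    and lip: "\<And>x y. norm (gradL x - gradL y) \<le> M * norm (x - y)"
    and zeta_pos: "zeta > 0"
  shows "\<forall>\<epsilon>>0. \<forall>K :: ((real^'n) \<times> (real^'n)) set. compact K \<longrightarrow>
           (\<exists>tstar>0. \<forall>J z1 z2 tau.
              is_maximal_solution zeta M gradL J z1 z2 tau \<and>
              (z1 0, z2 0) \<in> K \<and> tau 0 = 0 \<longrightarrow>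
              (\<forall>t\<in>J. t \<ge> tstar \<longrightarrow> (zeta\<^sup>2 / M) * (L (z1 t) - L zstar) \<le> \<epsilon>))"
proof (intro allI impI)
  fix \<epsilon> :: real and K :: "((real^'n) \<times> (real^'n)) set"
  assume eps: "\<epsilon> > 0" and K: "compact K"
  define c where "c = zeta\<^sup>2 / M"
  have cpos: "c > 0" unfolding c_def using zeta_pos Mpos by simp
  define \<phi> where "\<phi> x = EE L zstar c 2 (fst x - zstar) (snd x)" for x :: "(real^'n) \<times> (real^'n)"
  have Lc: "continuous_on UNIV L"
    using grad has_derivative_continuous continuous_at_imp_continuous_on by blast
  have "continuous_on K \<phi>"
    unfolding \<phi>_def EE_def
    by (intro continuous_intros continuous_on_compose2[OF Lc]) auto
  then have "compact (\<phi> ` K)" using K by (rule compact_continuous_image)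
  then have "bounded (\<phi> ` K)" by (rule compact_imp_bounded)
  then obtain B where B: "\<forall>x\<in>\<phi> ` K. \<bar>x\<bar> \<le> B" unfolding bounded_real by blast
  define Kc where "Kc = (4 + 4*M + 5*c + 5*c*M)"
  have Kc: "Kc > 0" unfolding Kc_def using Mpos cpos by (simp add: add_pos_pos)
  define X where "X = Kc * (exp (c*M) * max B 0)"
  have X0: "X \<ge> 0" unfolding X_def using Kc by simp
  define tstar where "tstar = max 1 (X / \<epsilon>)"
  have ts1: "tstar \<ge> 1" unfolding tstar_def by simp
  have tsX: "X \<le> \<epsilon> * tstar" unfolding tstar_def using eps
    by (smt (verit, ccfv_SIG) max.cobounded2 mult.commute pos_divide_le_eq)
  show "\<exists>tstar>0. \<forall>J z1 z2 tau.
              is_maximal_solution zeta M gradL J z1 z2 tau \<and>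
              (z1 0, z2 0) \<in> K \<and> tau 0 = 0 \<longrightarrow>
              (\<forall>t\<in>J. t \<ge> tstar \<longrightarrow> (zeta\<^sup>2 / M) * (L (z1 t) - L zstar) \<le> \<epsilon>)"
  proof (intro exI[of _ tstar] conjI allI impI ballI)
    show "tstar > 0" using ts1 by simp
    fix J z1 z2 tau t
    assume H: "is_maximal_solution zeta M gradL J z1 z2 tau \<and> (z1 0, z2 0) \<in> K \<and> tau 0 = 0"
      and tJ: "t \<in> J" and tt: "tstar \<le> t"
    have sol: "is_solution zeta M gradL J z1 z2 tau" using H unfolding is_maximal_solution_def by blast
    have t1: "t \<ge> 1" using ts1 tt by simp
    have tr: "c * (L (z1 t) - L zstar) \<le> Kc * (exp (c*M) * EE L zstar c 2 (z1 0 - zstar) (z2 0)) / (t+2)"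
      unfolding Kc_def
      by (rule traj[OF grad conv minimizer Mpos lip c_def zeta_pos sol _ tJ t1]) (use H in blast)
    have "EE L zstar c 2 (z1 0 - zstar) (z2 0) = \<phi> (z1 0, z2 0)" unfolding \<phi>_def by simp
    also have "\<dots> \<le> max B 0" using B H by fastforce
    finally have "Kc * (exp (c*M) * EE L zstar c 2 (z1 0 - zstar) (z2 0)) \<le> X"
      unfolding X_def using Kc by (simp add: mult_left_mono)
    then have "Kc * (exp (c*M) * EE L zstar c 2 (z1 0 - zstar) (z2 0)) / (t+2) \<le> X / (t+2)"
      using t1 by (simp add: divide_right_mono)
    also have "\<dots> \<le> X / tstar" using X0 tt ts1 by (intro divide_left_mono) auto
    also have "\<dots> \<le> \<epsilon>" using tsX ts1 by (simp add: divide_le_eq mult.commute)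
    finally show "(zeta\<^sup>2 / M) * (L (z1 t) - L zstar) \<le> \<epsilon>" using tr unfolding c_def by linarith
  qed
qed

end
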